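(* Let $L \geq 1$, $m = L+1$, $\gamma = (L+1)^3$, and for $i \in \{0,\ldots,L\}$ and $k \in [m]$ define $$w_i(k) = \gamma^{2(i+1)k - k^2 + 1} + \sum_{r=0}^L \gamma^{(2r+1)(i+1) - r^2 - r}, \qquad \pi_i(A_k) = \frac{w_i(k)}{\sum_{h=1}^m w_i(h)}.$$ Then for every $i \in \{0,\ldots,L\}$, $\pi_i(A_{i+1}) > 1 - \frac{1}{L+1}$, and for every $k \in [m]$ with $k \neq i+1$, $\frac{1}{2(L+1)^3} < \pi_i(A_k) < \frac{1}{(L+1)^2}$.
   Context: These numbers are the masses of the modes $A_k$ at level $i$ in the paper's construction of a multimodal target (with cross terms between well-separated modes neglected); here they are simply defined by the displayed formula. *)

theory Defs
  imports Complex_Main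
begin

definition w :: "nat \<Rightarrow> nat \<Rightarrow> nat \<Rightarrow> real" where
  "w L i k = (let \<gamma> = (real L + 1) ^ 3 in
     \<gamma> powi (2 * (int i + 1) * int k - (int k)\<^sup>2 + 1)
     + (\<Sum>r = 0..L. \<gamma> powi ((2 * int r + 1) * (int i + 1) - (int r)\<^sup>2 - int r)))"

definition pi_mass :: "nat \<Rightarrow> nat \<Rightarrow> nat \<Rightarrow> real" where
  "pi_mass L i k = w L i k / (\<Sum>h = 1..L+1. w L i h)"

end

theory Submission
  imports Defs
begin

lemma B1: fixes M c :: real assumes "M \<ge> 2" "1 \<le> c" "c \<le> 65/32"
  shows "(M-1)*((M-1)*(1+c)) < M^3 + c"
proof -
  have a: "(M-1)*((M-1)*(1+c)) \<le> (M-1)*((M-1)*(97/32))"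
    using assms by (intro mult_left_mono) auto
  define t where "t = M - 2"
  have "t \<ge> 0" "t*t \<ge> 0" "t*t*t \<ge> 0" using assms by (auto simp: t_def)
  have e1: "(M-1)*((M-1)*(97/32)) = 97/32 + (97/16)*t + (97/32)*(t*t)" unfolding t_def by algebra
  have e2: "M^3 = 8 + 12*t + 6*(t*t) + t*t*t" unfolding t_def by algebra
  show ?thesis using a e1 e2 \<open>t*t*t \<ge> 0\<close> \<open>t*t \<ge> 0\<close> \<open>t \<ge> 0\<close> assms by linarith
qed

lemma B2: fixes M c :: real assumes "M \<ge> 2" "1 \<le> c" "c \<le> 65/32"
  shows "M^3+c+(M-1)*(1+c) < 2*M^3*c"
proof -
  have "M*M \<ge> 2*2" using assms by (intro mult_mono) auto
  hence "(2*2)*M \<le> (M*M)*M" using assms by (intro mult_right_mono) auto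
  hence "M*M*M \<ge> 4*M" by simp
  hence a0: "M*M*M*c \<ge> (4*M)*c" using assms by (intro mult_right_mono) auto
  have b0: "M*M*M*c \<ge> M*M*M*1" using assms by (intro mult_left_mono) auto
  have d0: "M*c \<ge> M*1" using assms by (intro mult_left_mono) auto
  define P where "P = M*M*M*c"
  define Q where "Q = M*M*M"
  define R where "R = M*c"
  have a: "P \<ge> 4*R" using a0 unfolding P_def R_def by (simp add: mult.assoc)
  have b: "P \<ge> Q" using b0 unfolding P_def Q_def by simp
  have d: "R \<ge> M" using d0 unfolding R_def by simp
  have e: "M^3+c+(M-1)*(1+c) = Q + R + M - 1" unfolding Q_def R_def by algebra
  have f: "2*M^3*c = P + P" unfolding P_def by algebra
  have "Q + R + M - 1 < P + P" using a b d assms by linarith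
  then show ?thesis unfolding e f .
qed

lemma B3: fixes M c x :: real assumes "M \<ge> 2" "1 \<le> c" "c \<le> 65/32" "x \<le> 1 + c" "0<x"
  shows "M^2 * x < M^3 + c + x + (M-2)*c"
proof -
  have "M*M \<ge> 2*2" using assms by (intro mult_mono) auto
  have a: "(M*M-1)*x \<le> (M*M-1)*(1+c)" using assms \<open>M*M \<ge> 2*2\<close> by (intro mult_left_mono) auto
  have "M*M \<ge> 2*M" using assms by (intro mult_right_mono) auto
  have b: "c*(M*M-M) \<le> (65/32)*(M*M-M)" using assms \<open>M*M \<ge> 2*M\<close> by (intro mult_right_mono) auto
  define t where "t = M - 2"
  have "t \<ge> 0" "t*t \<ge> 0" "t*t*t \<ge> 0" using assms by (auto simp: t_def)
  have e1: "M^2 * x = x + (M*M-1)*x" by algebra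
  have e2: "(M*M-1)*(1+c) = M*M - 1 + c*(M*M-M) + c*M - c" by algebra
  have e3: "(65/32)*(M*M-M) = 65/16 + (195/32)*t + (65/32)*(t*t)" unfolding t_def by algebra
  have e4: "M*M = 4 + 4*t + t*t" unfolding t_def by algebra
  have e5: "M^3 = 8 + 12*t + 6*(t*t) + t*t*t" unfolding t_def by algebra
  have e6: "M^3 + c + x + (M-2)*c = M^3 + x + c*M - c" by algebra
  define X where "X = M^2*x"
  define Y where "Y = (M*M-1)*x"
  define Z where "Z = (M*M-1)*(1+c)"
  define Q where "Q = c*(M*M-M)"
  define R where "R = (65/32)*(M*M-M)"
  define P where "P = c*M"
  define MM where "MM = M*M"
  define M3 where "M3 = M^3"
  define t2 where "t2 = t*t"
  define t3 where "t3 = t*t*t"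
  have "X < M3 + x + P - c"
    using a b e1 e2 e3 e4 e5 \<open>t*t*t \<ge> 0\<close> \<open>t*t \<ge> 0\<close> \<open>t \<ge> 0\<close>
    unfolding X_def[symmetric] Y_def[symmetric] Z_def[symmetric] Q_def[symmetric] R_def[symmetric]
      P_def[symmetric] MM_def[symmetric] M3_def[symmetric] t2_def[symmetric] t3_def[symmetric]
    by linarith
  then show ?thesis unfolding e6 X_def M3_def P_def .
qed

lemma A1: fixes M c R :: real assumes "M \<ge> 2" "1 \<le> c" "c \<le> 65/32" "R \<le> (M-1)*(1+c)" "0 \<le> R"
  shows "(M^3 + c)/(M^3+c+R) > 1 - 1/M"
proof -
  have "(M-1)*R \<le> (M-1)*((M-1)*(1+c))" using assms by (intro mult_left_mono) auto
  also have "\<dots> < M^3 + c" using B1[OF assms(1-3)] .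
  finally have h: "(M-1)*R < M^3+c" .
  have "0 < M^3 + c" using assms by (smt (verit) one_le_power)
  show ?thesis using h assms \<open>0 < M^3+c\<close> by (simp add: field_simps)
qed

lemma powi_split: "(g::real) \<noteq> 0 \<Longrightarrow> a = b + e \<Longrightarrow> g powi a = g powi b * g powi e"
  by (simp add: power_int_add)

lemma w_factor:
  fixes L i k :: nat
  defines "g \<equiv> (real L + 1) ^ 3" and "n \<equiv> int i + 1"
  shows "(let \<gamma> = (real L + 1) ^ 3 in
     \<gamma> powi (2 * (int i + 1) * int k - (int k)\<^sup>2 + 1)
     + (\<Sum>r = 0..L. \<gamma> powi ((2 * int r + 1) * (int i + 1) - (int r)\<^sup>2 - int r)))
    = g powi (n*n) * (g powi (1 - (int k - n)\<^sup>2) + (\<Sum>r = 0..L. g powi (- ((int r - n) * (int r - n + 1)))))"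
proof -
  have g0: "g \<noteq> 0" unfolding g_def by simp
  have 1: "g powi (2 * (int i + 1) * int k - (int k)\<^sup>2 + 1) = g powi (n*n) * g powi (1 - (int k - n)\<^sup>2)"
    by (rule powi_split[OF g0]) (simp add: n_def power2_eq_square algebra_simps)
  have 2: "g powi ((2 * int r + 1) * (int i + 1) - (int r)\<^sup>2 - int r) = g powi (n*n) * g powi (- ((int r - n) * (int r - n + 1)))" for r
    by (rule powi_split[OF g0]) (simp add: n_def power2_eq_square algebra_simps)
  show ?thesis unfolding Let_def g_def[symmetric] 1 2 by (simp add: sum_distrib_left distrib_left)
qed
lemma lt_frac1: fixes b S y :: real assumes "0 < b" "0 < S" "S < b * y" shows "1 / b < y / S"
  using assms by (simp add: field_simps)
lemma lt_frac2: fixes b S y :: real assumes "0 < b" "0 < S" "b * y < S" shows "y / S < 1 / b"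
  using assms by (simp add: field_simps)

lemma t_bounds:
  fixes g :: real and n r :: int
  assumes "g \<ge> 8"
  shows "0 < g powi (- ((r - n) * (r - n + 1)))"
    and "g powi (- ((r - n) * (r - n + 1))) \<le> 1 / g^2 + (if r = n - 1 then 1 else 0) + (if r = n then 1 else 0)"
proof -
  show "0 < g powi (- ((r - n) * (r - n + 1)))" using assms by simp
  have nn: "(r - n) * (r - n + 1) \<ge> 0"
    by (cases "r - n \<ge> 0") (auto simp: mult_nonpos_nonpos)
  show "g powi (- ((r - n) * (r - n + 1))) \<le> 1 / g^2 + (if r = n - 1 then 1 else 0) + (if r = n then 1 else 0)"
  proof (cases "r = n - 1 \<or> r = n")
    case True
    then show ?thesis using assms by auto
  next
    case False
    have "(r - n) * (r - n + 1) \<ge> 2"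
    proof (cases "r - n \<ge> 1")
      case True
      then have "(r - n) * (r - n + 1) \<ge> 1 * 2" by (intro mult_mono) auto
      then show ?thesis by simp
    next
      case F: False
      with False have "r - n \<le> -2" by auto
      then have "(-(r - n)) * (-(r - n + 1)) \<ge> 2 * 1" by (intro mult_mono) auto
      moreover have "(-(r - n)) * (-(r - n + 1)) = (r-n)*(r-n+1)" by (rule minus_mult_minus)
      ultimately show ?thesis by linarith
    qed
    then have "g powi (- ((r - n) * (r - n + 1))) \<le> g powi (-2)"
      using assms by (intro power_int_increasing) auto
    also have "\<dots> = 1 / g^2" by (simp add: power_int_minus divide_inverse)
    finally show ?thesis using False by auto
  qed
qed

theorem lemma11:
  fixes L :: nat
  assumes "L \<ge> 1"
  shows "\<forall>i \<in> {0..L}.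
           pi_mass L i (i + 1) > 1 - 1 / (real L + 1) \<and>
           (\<forall>k \<in> {1..L+1}. k \<noteq> i + 1 \<longrightarrow>
              1 / (2 * (real L + 1) ^ 3) < pi_mass L i k \<and>
              pi_mass L i k < 1 / (real L + 1) ^ 2)"
proof
  fix i assume iL: "i \<in> {0..L}"
  define M where "M = real L + 1"
  define g where "g = M ^ 3"
  define n where "n = int i + 1"
  define t where "t r = g powi (- ((int r - n) * (int r - n + 1)))" for r :: nat
  define c where "c = (\<Sum>r = 0..L. t r)"
  define x where "x k = g powi (1 - (int k - n)\<^sup>2) + c" for k :: nat
  have M2: "M \<ge> 2" using assms by (simp add: M_def)
  have "M^3 \<ge> 2^3" using M2 by (intro power_mono) auto
  hence g8: "g \<ge> 8" by (simp add: g_def)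
  have wx: "w L i k = g powi (n*n) * x k" for k
    unfolding w_def w_factor x_def c_def t_def g_def M_def n_def by simp
  have G0: "g powi (n*n) > 0" using g8 by simp
  have pix: "pi_mass L i k = x k / (\<Sum>h = 1..L+1. x h)" for k
    unfolding pi_mass_def wx sum_distrib_left[symmetric] using G0 g8 by simp
  have tpos: "t r > 0" for r unfolding t_def using t_bounds(1)[OF g8] by blast
  have ti: "t i = 1" unfolding t_def n_def by simp
  have c1: "c \<ge> 1"
  proof -
    have "t i \<le> c" unfolding c_def using iL tpos by (intro member_le_sum) (auto intro: less_imp_le)
    thus ?thesis using ti by simp
  qed
  have c2: "c \<le> 65/32"
  proof -
    have "c \<le> (\<Sum>r = 0..L. 1 / g^2 + (if int r = n - 1 then 1 else 0) + (if int r = n then 1 else 0))"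
      unfolding c_def t_def by (intro sum_mono t_bounds(2)[OF g8])
    also have "\<dots> = (L+1) / g^2 + (\<Sum>r = 0..L. (if r = i then 1 else 0)) + (\<Sum>r = 0..L. (if r = i + 1 then (1::real) else 0))"
    proof -
      have e: "(int r = int i + 1) = (r = i + 1)" for r by auto
      show ?thesis unfolding sum.distrib n_def e by simp
    qed
    also have "\<dots> \<le> M / g^2 + 1 + 1"
      using iL by (auto simp: M_def add.commute)
    also have "M / g^2 \<le> 1/32"
    proof -
      have "M^5 \<ge> 2^5" using M2 by (intro power_mono) auto
      hence "32 * M \<le> M^5 * M" using M2 by (intro mult_right_mono) auto
      also have "\<dots> = g^2" by (simp add: g_def power2_eq_square power3_eq_cube eval_nat_numeral)
      finally show ?thesis using g8 by (simp add: field_simps)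
    qed
    finally show ?thesis by simp
  qed
  have xn: "x (i+1) = g + c" unfolding x_def n_def by simp
  have xk: "c < x k \<and> x k \<le> 1 + c" if "k \<noteq> i + 1" for k
  proof -
    have z: "int k - n \<noteq> 0" using that by (simp add: n_def)
    then have "1 \<le> \<bar>int k - n\<bar>" by arith
    then have "1 \<le> \<bar>int k - n\<bar>\<^sup>2" by (rule one_le_power)
    then have "(int k - n)\<^sup>2 \<ge> 1" by simp
    hence "g powi (1 - (int k - n)\<^sup>2) \<le> g powi 0" using g8 by (intro power_int_increasing) auto
    moreover have "g powi (1 - (int k - n)\<^sup>2) > 0" using g8 by simp
    ultimately show ?thesis unfolding x_def by simp
  qed
  define D where "D = {1..L+1} - {i+1}"
  have finD: "finite D" unfolding D_def by simp
  have iD: "i + 1 \<in> {1..L+1}" using iL by simp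
  have cardD: "card D = L" unfolding D_def using iD by simp
  have Ssplit: "(\<Sum>h = 1..L+1. x h) = x (i+1) + sum x D"
    unfolding D_def using iD by (intro sum.remove) auto
  have Dup: "sum x D \<le> real L * (1 + c)"
    using sum_bounded_above[of D x "1+c"] xk cardD unfolding D_def by auto
  have Dnn: "sum x D \<ge> 0"
  proof (intro sum_nonneg)
    fix h assume "h \<in> D"
    then have "h \<noteq> i + 1" by (simp add: D_def)
    then show "0 \<le> x h" using xk[of h] c1 by linarith
  qed
  have Mm1: "real L = M - 1" by (simp add: M_def)
  show "pi_mass L i (i + 1) > 1 - 1 / (real L + 1) \<and>
           (\<forall>k \<in> {1..L+1}. k \<noteq> i + 1 \<longrightarrow>
              1 / (2 * (real L + 1) ^ 3) < pi_mass L i k \<and>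
              pi_mass L i k < 1 / (real L + 1) ^ 2)"
  proof (rule conjI)
    have "(M^3+c)/(M^3+c+sum x D) > 1 - 1/M"
      by (rule A1[OF M2 c1 c2 _ Dnn]) (use Dup Mm1 in simp)
    then show "pi_mass L i (i + 1) > 1 - 1 / (real L + 1)"
      unfolding pix Ssplit xn g_def by (simp only: M_def)
  next
    show "\<forall>k \<in> {1..L+1}. k \<noteq> i + 1 \<longrightarrow>
              1 / (2 * (real L + 1) ^ 3) < pi_mass L i k \<and>
              pi_mass L i k < 1 / (real L + 1) ^ 2"
    proof (intro ballI impI)
    fix k assume k: "k \<in> {1..L+1}" "k \<noteq> i + 1"
    have kD: "k \<in> D" using k by (simp add: D_def)
    have Spos: "(\<Sum>h = 1..L+1. x h) > 0" unfolding Ssplit xn using g8 c1 Dnn by simp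
    have xk0: "x k > 0" using xk[OF k(2)] c1 by simp
    have "(\<Sum>h = 1..L+1. x h) \<le> M^3 + c + (M-1)*(1+c)"
      unfolding Ssplit xn g_def using Dup unfolding Mm1 by linarith
    also have "\<dots> < 2*M^3*c" by (rule B2[OF M2 c1 c2])
    also have "\<dots> < 2*M^3*x k" using xk[OF k(2)] M2 by (intro mult_strict_left_mono) auto
    finally have l: "(\<Sum>h = 1..L+1. x h) < 2*M^3*x k" .
    have lower: "1 / (2 * (real L + 1) ^ 3) < pi_mass L i k"
    proof -
      have "1 / (2*M^3) < x k / (\<Sum>h = 1..L+1. x h)"
        by (rule lt_frac1[OF _ Spos l]) (use M2 in simp)
      then show ?thesis unfolding pix by (simp only: M_def)
    qed
    have Drem: "sum x D = x k + sum x (D - {k})" using finD kD by (rule sum.remove)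
    have "sum x (D - {k}) \<ge> real (card (D - {k})) * c"
    proof (rule sum_bounded_below)
      fix h assume "h \<in> D - {k}"
      then have "h \<noteq> i + 1" by (simp add: D_def)
      then show "c \<le> x h" using xk[of h] by linarith
    qed
    moreover have "card (D - {k}) = L - 1" using cardD kD finD by simp
    moreover have "real (L - 1) = M - 2" using assms by (simp add: M_def of_nat_diff)
    ultimately have "sum x (D - {k}) \<ge> (M-2) * c" by simp
    hence "M^3 + c + x k + (M-2)*c \<le> (\<Sum>h = 1..L+1. x h)"
      unfolding Ssplit xn Drem g_def by linarith
    hence "M^2 * x k < (\<Sum>h = 1..L+1. x h)"
      using B3[OF M2 c1 c2 _ xk0] xk[OF k(2)] by linarith
    then have upper: "pi_mass L i k < 1 / (real L + 1) ^ 2"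
    proof -
      have "x k / (\<Sum>h = 1..L+1. x h) < 1 / M^2"
        by (rule lt_frac2[OF _ Spos \<open>M^2 * x k < (\<Sum>h = 1..L+1. x h)\<close>]) (use M2 in simp)
      then show ?thesis unfolding pix by (simp only: M_def)
    qed
  show "1 / (2 * (real L + 1) ^ 3) < pi_mass L i k \<and> pi_mass L i k < 1 / (real L + 1) ^ 2"
      using lower upper by blast
    qed
  qed
qed

end
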